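(* Let $n$ be a positive integer that is coprime to $2\cdot 3$, a multiple of $5$, and not a multiple of $5^2$. Then it is impossible to place $n^2$ queens on $\mathbb{Z}_n^3$ without conflict.
   Context: A queen on $\mathbb{Z}_n^d$ (here $d=3$) can move any number of times by a vector $\mathbf{x}\in\{-1,0,1\}^d\setminus\{\mathbf{0}\}$ (coordinates modulo $n$). Queens occupy distinct fields; two queens at distinct fields $\mathbf{u},\mathbf{v}\in\mathbb{Z}_n^d$ are in conflict if $\mathbf{v}-\mathbf{u}=t\mathbf{x}$ for some $t\in\mathbb{Z}_n$ and some nonzero $\mathbf{x}\in\{-1,0,1\}^d$. A placement is without conflict if no two queens are in conflict. *)

theory Defs
  imports "HOL-Number_Theory.Cong"
begin

text \<open>Fields of Z_n^3: triples of canonical residues 0..n-1.\<close>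
definition fields :: "nat \<Rightarrow> (int \<times> int \<times> int) set" where
  "fields n = {0..<int n} \<times> {0..<int n} \<times> {0..<int n}"

definition directions :: "(int \<times> int \<times> int) set" where
  "directions = ({-1,0,1} \<times> {-1,0,1} \<times> {-1,0,1}) - {(0,0,0)}"

definition in_conflict :: "nat \<Rightarrow> int \<times> int \<times> int \<Rightarrow> int \<times> int \<times> int \<Rightarrow> bool" where
  "in_conflict n u v \<longleftrightarrow> u \<noteq> v \<and>
     (\<exists>t::int. \<exists>(x1,x2,x3)\<in>directions.
        [fst v - fst u = t * x1] (mod int n) \<and>
        [fst (snd v) - fst (snd u) = t * x2] (mod int n) \<and>
        [snd (snd v) - snd (snd u) = t * x3] (mod int n))"

definition conflict_free :: "nat \<Rightarrow> (int \<times> int \<times> int) set \<Rightarrow> bool" where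
  "conflict_free n Q \<longleftrightarrow> Q \<subseteq> fields n \<and> (\<forall>u\<in>Q. \<forall>v\<in>Q. \<not> in_conflict n u v)"

end

theory Submission
  imports Defs
begin

lemma no_conf:
  assumes cf: "conflict_free n Q" and u: "u \<in> Q" and v: "v \<in> Q"
    and x: "(x1,x2,x3) \<in> directions"
    and d1: "int n dvd (fst v - fst u - t * x1)"
    and d2: "int n dvd (fst (snd v) - fst (snd u) - t * x2)"
    and d3: "int n dvd (snd (snd v) - snd (snd u) - t * x3)"
  shows "u = v"
proof (rule ccontr)
  assume "u \<noteq> v"
  moreover have "[fst v - fst u = t * x1] (mod int n)"
    "[fst (snd v) - fst (snd u) = t * x2] (mod int n)"
    "[snd (snd v) - snd (snd u) = t * x3] (mod int n)"
    using d1 d2 d3 by (simp_all add: cong_iff_dvd_diff)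
  ultimately have "in_conflict n u v" unfolding in_conflict_def using x by blast
  thus False using cf u v unfolding conflict_free_def by blast
qed

lemma inj3:
  assumes cf: "conflict_free n Q" and d: "(s1,s2,1) \<in> directions"
  shows "inj_on (\<lambda>q. ((fst q - s1 * snd (snd q)) mod int n, (fst (snd q) - s2 * snd (snd q)) mod int n)) Q"
proof (rule inj_onI)
  fix u v assume u: "u \<in> Q" and v: "v \<in> Q" and eq: "((fst u - s1 * snd (snd u)) mod int n, (fst (snd u) - s2 * snd (snd u)) mod int n) = ((fst v - s1 * snd (snd v)) mod int n, (fst (snd v) - s2 * snd (snd v)) mod int n)"
  from eq[symmetric] have e1: "int n dvd (fst v - s1 * snd (snd v)) - (fst u - s1 * snd (snd u))"
    and e2: "int n dvd (fst (snd v) - s2 * snd (snd v)) - (fst (snd u) - s2 * snd (snd u))"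
    by (simp_all add: mod_eq_dvd_iff)
  show "u = v"
    apply (rule no_conf[OF cf u v d, where t="snd (snd v) - snd (snd u)"])
    using e1 e2 by (simp_all add: algebra_simps)
qed

lemma inj2:
  assumes cf: "conflict_free n Q" and d: "(s1,1,0) \<in> directions"
  shows "inj_on (\<lambda>q. ((fst q - s1 * fst (snd q)) mod int n, snd (snd q) mod int n)) Q"
proof (rule inj_onI)
  fix u v assume u: "u \<in> Q" and v: "v \<in> Q" and eq: "((fst u - s1 * fst (snd u)) mod int n, snd (snd u) mod int n) = ((fst v - s1 * fst (snd v)) mod int n, snd (snd v) mod int n)"
  from eq[symmetric] have e1: "int n dvd (fst v - s1 * fst (snd v)) - (fst u - s1 * fst (snd u))"
    and e2: "int n dvd snd (snd v) - snd (snd u)"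
    by (simp_all add: mod_eq_dvd_iff)
  show "u = v"
    apply (rule no_conf[OF cf u v d, where t="fst (snd v) - fst (snd u)"])
    using e1 e2 by (simp_all add: algebra_simps)
qed

lemma inj1:
  assumes cf: "conflict_free n Q"
  shows "inj_on (\<lambda>q. (fst (snd q) mod int n, snd (snd q) mod int n)) Q"
proof (rule inj_onI)
  have d: "(1,0,0) \<in> directions" by (simp add: directions_def)
  fix u v assume u: "u \<in> Q" and v: "v \<in> Q" and eq: "(fst (snd u) mod int n, snd (snd u) mod int n) = (fst (snd v) mod int n, snd (snd v) mod int n)"
  from eq[symmetric] have e1: "int n dvd fst (snd v) - fst (snd u)"
    and e2: "int n dvd snd (snd v) - snd (snd u)"
    by (simp_all add: mod_eq_dvd_iff)
  show "u = v"
    apply (rule no_conf[OF cf u v d, where t="fst v - fst u"])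
    using e1 e2 by (simp_all add: algebra_simps)
qed

lemma ind_card: "finite A \<Longrightarrow> (\<Sum>x\<in>A. if P x then 1 else 0) = card {x\<in>A. P x}"
  by (simp add: sum.inter_filter[symmetric])

lemma card_res:
  assumes "5 dvd n" "0 \<le> r" "r < (5::int)"
  shows "card {b \<in> {0..<int n}. b mod 5 = r} = n div 5"
proof -
  obtain k where n: "n = 5 * k" using assms(1) by blast
  have "{b \<in> {0..<int n}. b mod 5 = r} = (\<lambda>j. 5 * j + r) ` {0..<int k}"
  proof (rule set_eqI, rule iffI)
    fix b assume b: "b \<in> {b \<in> {0..<int n}. b mod 5 = r}"
    hence "b = 5 * (b div 5) + r" "0 \<le> b div 5" "b div 5 < int k" using n assms by auto
    thus "b \<in> (\<lambda>j. 5 * j + r) ` {0..<int k}" by force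
  next
    fix b assume "b \<in> (\<lambda>j. 5 * j + r) ` {0..<int k}"
    thus "b \<in> {b \<in> {0..<int n}. b mod 5 = r}" using n assms by auto
  qed
  moreover have "inj_on (\<lambda>j. 5 * j + r) {0..<int k}" by (rule inj_onI) simp
  ultimately show ?thesis using n by (simp add: card_image)
qed

lemma inv5: "(b::int) mod 5 \<noteq> 0 \<Longrightarrow> \<exists>g. (b * g) mod 5 = 1"
proof -
  assume h: "b mod 5 \<noteq> 0"
  have e: "(b * g) mod 5 = ((b mod 5) * g) mod 5" for g by (simp add: mod_mult_left_eq)
  have "b mod 5 = 1 \<or> b mod 5 = 2 \<or> b mod 5 = 3 \<or> b mod 5 = 4" using h by auto
  thus ?thesis
  proof (elim disjE)
    assume "b mod 5 = 1" hence "(b * 1) mod 5 = 1" using e[of 1] by simp thus ?thesis by blast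
  next
    assume "b mod 5 = 2" hence "(b * 3) mod 5 = 1" using e[of 3] by simp thus ?thesis by blast
  next
    assume "b mod 5 = 3" hence "(b * 2) mod 5 = 1" using e[of 2] by simp thus ?thesis by blast
  next
    assume "b mod 5 = 4" hence "(b * 4) mod 5 = 1" using e[of 4] by simp thus ?thesis by blast
  qed
qed


lemma card_lin:
  assumes "5 dvd n" "\<beta> mod 5 \<noteq> 0"
  shows "card {p \<in> {0..<int n} \<times> {0..<int n}. (\<alpha> * fst p + \<beta> * snd p) mod 5 = 0} = n * (n div 5)"
proof -
  obtain g where g: "(\<beta>*g) mod 5 = 1" using inv5 assms(2) by blast
  define k where "k = (\<beta>*g) div 5"
  have k: "\<beta>*g = 1 + 5*k" using g div_mult_mod_eq[of "\<beta>*g" 5] unfolding k_def by linarith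
  let ?A = "{0..<int n}"
  have iff: "(\<alpha> * a + \<beta> * b) mod 5 = 0 \<longleftrightarrow> b mod 5 = (-(\<alpha>*a*g)) mod 5" for a b
  proof -
    have i1: "b mod 5 = (-(\<alpha>*a*g)) mod 5 \<longleftrightarrow> 5 dvd b + \<alpha>*a*g" by (simp add: mod_eq_dvd_iff)
    have i2: "(\<alpha> * a + \<beta> * b) mod 5 = 0 \<longleftrightarrow> 5 dvd \<alpha> * a + \<beta> * b" by presburger
    have e1: "g * (\<alpha> * a + \<beta> * b) = (b + \<alpha>*a*g) + 5 * (k*b)"
    proof -
      have "g * (\<alpha> * a + \<beta> * b) = \<alpha>*a*g + b*(\<beta>*g)" by (simp add: algebra_simps)
      also have "... = (b + \<alpha>*a*g) + 5 * (k*b)" by (simp add: k algebra_simps)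
      finally show ?thesis .
    qed
    have e2: "\<beta> * (b + \<alpha>*a*g) = (\<alpha> * a + \<beta> * b) + 5 * (k*\<alpha>*a)"
    proof -
      have "\<beta> * (b + \<alpha>*a*g) = \<beta>*b + \<alpha>*a*(\<beta>*g)" by (simp add: algebra_simps)
      also have "... = (\<alpha> * a + \<beta> * b) + 5 * (k*\<alpha>*a)" by (simp add: k algebra_simps)
      finally show ?thesis .
    qed
    show ?thesis unfolding i1 i2
    proof
      assume "5 dvd \<alpha> * a + \<beta> * b"
      hence "5 dvd g * (\<alpha> * a + \<beta> * b)" by simp
      thus "5 dvd b + \<alpha>*a*g" unfolding e1 by (simp add: dvd_add_left_iff)
    next
      assume "5 dvd b + \<alpha>*a*g"
      hence "5 dvd \<beta> * (b + \<alpha>*a*g)" by simp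
      thus "5 dvd \<alpha> * a + \<beta> * b" unfolding e2 by (simp add: dvd_add_left_iff)
    qed
  qed
  have eq: "{p \<in> ?A \<times> ?A. (\<alpha> * fst p + \<beta> * snd p) mod 5 = 0} = Sigma ?A (\<lambda>a. {b \<in> ?A. b mod 5 = (-(\<alpha>*a*g)) mod 5})"
    using iff by auto
  have "card (Sigma ?A (\<lambda>a. {b \<in> ?A. b mod 5 = (-(\<alpha>*a*g)) mod 5})) = (\<Sum>a\<in>?A. card {b \<in> ?A. b mod 5 = (-(\<alpha>*a*g)) mod 5})"
    by (rule card_SigmaI) (auto intro: finite_subset[of _ "{0..<int n}"])
  also have "... = (\<Sum>a\<in>?A. n div 5)"
    by (rule sum.cong[OF refl], rule card_res[OF assms(1)]) auto
  also have "... = n * (n div 5)" by simp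
  finally show ?thesis using eq by simp
qed

lemma card_lin2:
  assumes "5 dvd n" "\<alpha> mod 5 \<noteq> 0"
  shows "card {p \<in> {0..<int n} \<times> {0..<int n}. (\<alpha> * fst p + \<beta> * snd p) mod 5 = 0} = n * (n div 5)"
proof -
  let ?A = "{0..<int n}"
  have "{p \<in> ?A \<times> ?A. (\<alpha> * fst p + \<beta> * snd p) mod 5 = 0} = prod.swap ` {p \<in> ?A \<times> ?A. (\<beta> * fst p + \<alpha> * snd p) mod 5 = 0}"
    by (auto simp: image_iff add.commute)
  moreover have "card (prod.swap ` {p \<in> ?A \<times> ?A. (\<beta> * fst p + \<alpha> * snd p) mod 5 = 0}) = card {p \<in> ?A \<times> ?A. (\<beta> * fst p + \<alpha> * snd p) mod 5 = 0}"
    by (rule card_image) (simp add: inj_on_def)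
  ultimately show ?thesis using card_lin[OF assms] by simp
qed

lemma count_proj:
  assumes "n > 0" "card Q = n^2" "inj_on f Q" "f ` Q \<subseteq> {0..<int n} \<times> {0..<int n}"
  shows "card {q\<in>Q. P (f q)} = card {p \<in> {0..<int n} \<times> {0..<int n}. P p}"
proof -
  let ?A = "{0..<int n}"
  have fin: "finite Q" using assms(1,2) card.infinite by force
  have "card (f ` Q) = card (?A \<times> ?A)" using assms(2,3) by (simp add: card_image card_cartesian_product power2_eq_square)
  hence im: "f ` Q = ?A \<times> ?A" using assms(4) by (intro card_subset_eq) auto
  have "card {q\<in>Q. P (f q)} = card (f ` {q\<in>Q. P (f q)})"
    by (rule card_image[symmetric]) (rule inj_on_subset[OF assms(3)], auto)
  also have "f ` {q\<in>Q. P (f q)} = {p \<in> f ` Q. P p}" by auto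
  finally show ?thesis using im by simp
qed

lemma core_gen:
  assumes "n > 0" "5 dvd n" "card Q = n^2" "inj_on f Q" "f ` Q \<subseteq> {0..<int n} \<times> {0..<int n}"
    and d: "\<forall>q\<in>Q. (5::int) dvd (L q - (\<alpha> * fst (f q) + \<beta> * snd (f q)))"
    and nz: "\<not> (\<alpha> mod 5 = 0 \<and> \<beta> mod 5 = 0)"
  shows "card {q\<in>Q. L q mod 5 = 0} = n * (n div 5)"
proof -
  have "{q\<in>Q. L q mod 5 = 0} = {q\<in>Q. (\<alpha> * fst (f q) + \<beta> * snd (f q)) mod 5 = 0}"
  proof -
    have h: "L q mod 5 = (\<alpha> * fst (f q) + \<beta> * snd (f q)) mod 5" if "q \<in> Q" for q
      using d that by (simp add: mod_eq_dvd_iff)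
    show ?thesis by (rule Collect_cong) (metis h)
  qed
  also have "card ... = card {p \<in> {0..<int n} \<times> {0..<int n}. (\<alpha> * fst p + \<beta> * snd p) mod 5 = 0}"
    by (rule count_proj[OF assms(1) assms(3-5), where P="\<lambda>p. (\<alpha> * fst p + \<beta> * snd p) mod 5 = 0"])
  also have "... = n * (n div 5)"
    using nz card_lin[OF assms(2)] card_lin2[OF assms(2)] by blast
  finally show ?thesis .
qed

definition dot :: "int\<times>int\<times>int \<Rightarrow> int\<times>int\<times>int \<Rightarrow> int" where
  "dot e q = fst e * fst q + fst (snd e) * fst (snd q) + snd (snd e) * snd (snd q)"

lemma dmod: "5 dvd n \<Longrightarrow> (5::int) dvd x - x mod int n"
proof -
  assume "5 dvd n"
  hence "(5::int) dvd int n" by presburger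
  moreover have "int n dvd x - x mod int n" by (simp add: mod_eq_dvd_iff)
  ultimately show ?thesis by (rule dvd_trans)
qed

lemma nz_helper:
  assumes "(5::int) dvd c" "e3 = c - a - b" "5 dvd a" "5 dvd b"
  shows "5 dvd e3"
  using assms by simp

lemma core3:
  assumes n: "n > 0" "5 dvd n" and cf: "conflict_free n Q" and cQ: "card Q = n^2"
    and s: "s1 \<in> {-1,0,1}" "s2 \<in> {-1,0,1}" and c: "(e1*s1+e2*s2+e3) mod 5 = 0"
    and nz: "\<not> (e1 mod 5 = 0 \<and> e2 mod 5 = 0 \<and> e3 mod 5 = 0)"
  shows "card {q\<in>Q. dot (e1,e2,e3) q mod 5 = 0} = n * (n div 5)"
proof (rule core_gen[OF n cQ])
  have d: "(s1,s2,1) \<in> directions" using s by (auto simp: directions_def)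
  show "inj_on (\<lambda>q. ((fst q - s1 * snd (snd q)) mod int n, (fst (snd q) - s2 * snd (snd q)) mod int n)) Q"
    by (rule inj3[OF cf d])
  show "(\<lambda>q. ((fst q - s1 * snd (snd q)) mod int n, (fst (snd q) - s2 * snd (snd q)) mod int n)) ` Q \<subseteq> {0..<int n} \<times> {0..<int n}"
    using n(1) by auto
  show "\<forall>q\<in>Q. 5 dvd dot (e1, e2, e3) q - (e1 * fst ((fst q - s1 * snd (snd q)) mod int n, (fst (snd q) - s2 * snd (snd q)) mod int n) + e2 * snd ((fst q - s1 * snd (snd q)) mod int n, (fst (snd q) - s2 * snd (snd q)) mod int n))"
  proof
    fix q :: "int\<times>int\<times>int"
    obtain q1 q2 q3 where q: "q = (q1,q2,q3)" by (cases q) auto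
    define X1 where "X1 = q1 - s1 * q3"
    define X2 where "X2 = q2 - s2 * q3"
    have "dot (e1,e2,e3) q - (e1 * (X1 mod int n) + e2 * (X2 mod int n))
        = e1 * (X1 - X1 mod int n) + e2 * (X2 - X2 mod int n) + (e1*s1+e2*s2+e3) * q3"
      unfolding q dot_def X1_def X2_def by (simp add: algebra_simps)
    moreover have "5 dvd e1 * (X1 - X1 mod int n) + e2 * (X2 - X2 mod int n) + (e1*s1+e2*s2+e3) * q3"
      using dmod[OF n(2), of X1] dmod[OF n(2), of X2] c by (intro dvd_add) auto
    ultimately show "5 dvd dot (e1, e2, e3) q - (e1 * fst ((fst q - s1 * snd (snd q)) mod int n, (fst (snd q) - s2 * snd (snd q)) mod int n) + e2 * snd ((fst q - s1 * snd (snd q)) mod int n, (fst (snd q) - s2 * snd (snd q)) mod int n))"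
      unfolding q X1_def X2_def by simp
  qed
  show "\<not> (e1 mod 5 = 0 \<and> e2 mod 5 = 0)"
  proof
    assume h: "e1 mod 5 = 0 \<and> e2 mod 5 = 0"
    have "5 dvd e3"
      by (rule nz_helper[of "e1*s1+e2*s2+e3" _ "e1*s1" "e2*s2"]) (use c h in auto)
    thus False using nz h by auto
  qed
qed

lemma core2:
  assumes n: "n > 0" "5 dvd n" and cf: "conflict_free n Q" and cQ: "card Q = n^2"
    and s: "s1 \<in> {-1,0,1}" and c: "(e1*s1+e2) mod 5 = 0"
    and nz: "\<not> (e1 mod 5 = 0 \<and> e2 mod 5 = 0 \<and> e3 mod 5 = 0)"
  shows "card {q\<in>Q. dot (e1,e2,e3) q mod 5 = 0} = n * (n div 5)"
proof (rule core_gen[OF n cQ])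
  have d: "(s1,1,0) \<in> directions" using s by (auto simp: directions_def)
  show "inj_on (\<lambda>q. ((fst q - s1 * fst (snd q)) mod int n, snd (snd q) mod int n)) Q"
    by (rule inj2[OF cf d])
  show "(\<lambda>q. ((fst q - s1 * fst (snd q)) mod int n, snd (snd q) mod int n)) ` Q \<subseteq> {0..<int n} \<times> {0..<int n}"
    using n(1) by auto
  show "\<forall>q\<in>Q. 5 dvd dot (e1, e2, e3) q - (e1 * fst ((fst q - s1 * fst (snd q)) mod int n, snd (snd q) mod int n) + e3 * snd ((fst q - s1 * fst (snd q)) mod int n, snd (snd q) mod int n))"
  proof
    fix q :: "int\<times>int\<times>int"
    obtain q1 q2 q3 where q: "q = (q1,q2,q3)" by (cases q) auto
    define X1 where "X1 = q1 - s1 * q2"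
    have "dot (e1,e2,e3) q - (e1 * (X1 mod int n) + e3 * (q3 mod int n))
        = e1 * (X1 - X1 mod int n) + e3 * (q3 - q3 mod int n) + (e1*s1+e2) * q2"
      unfolding q dot_def X1_def by (simp add: algebra_simps)
    moreover have "5 dvd e1 * (X1 - X1 mod int n) + e3 * (q3 - q3 mod int n) + (e1*s1+e2) * q2"
      using dmod[OF n(2), of X1] dmod[OF n(2), of q3] c by (intro dvd_add) auto
    ultimately show "5 dvd dot (e1, e2, e3) q - (e1 * fst ((fst q - s1 * fst (snd q)) mod int n, snd (snd q) mod int n) + e3 * snd ((fst q - s1 * fst (snd q)) mod int n, snd (snd q) mod int n))"
      unfolding q X1_def by simp
  qed
  show "\<not> (e1 mod 5 = 0 \<and> e3 mod 5 = 0)"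
  proof
    assume h: "e1 mod 5 = 0 \<and> e3 mod 5 = 0"
    have "5 dvd e2"
      by (rule nz_helper[of "e1*s1+e2" _ "e1*s1" 0]) (use c h in auto)
    thus False using nz h by auto
  qed
qed

lemma core1:
  assumes n: "n > 0" "5 dvd n" and cf: "conflict_free n Q" and cQ: "card Q = n^2"
    and c: "e1 mod 5 = 0"
    and nz: "\<not> (e1 mod 5 = 0 \<and> e2 mod 5 = 0 \<and> e3 mod 5 = 0)"
  shows "card {q\<in>Q. dot (e1,e2,e3) q mod 5 = 0} = n * (n div 5)"
proof (rule core_gen[OF n cQ])
  show "inj_on (\<lambda>q. (fst (snd q) mod int n, snd (snd q) mod int n)) Q"
    by (rule inj1[OF cf])
  show "(\<lambda>q. (fst (snd q) mod int n, snd (snd q) mod int n)) ` Q \<subseteq> {0..<int n} \<times> {0..<int n}"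
    using n(1) by auto
  show "\<forall>q\<in>Q. 5 dvd dot (e1, e2, e3) q - (e2 * fst (fst (snd q) mod int n, snd (snd q) mod int n) + e3 * snd (fst (snd q) mod int n, snd (snd q) mod int n))"
  proof
    fix q :: "int\<times>int\<times>int"
    obtain q1 q2 q3 where q: "q = (q1,q2,q3)" by (cases q) auto
    have "dot (e1,e2,e3) q - (e2 * (q2 mod int n) + e3 * (q3 mod int n))
        = e2 * (q2 - q2 mod int n) + e3 * (q3 - q3 mod int n) + e1 * q1"
      unfolding q dot_def by (simp add: algebra_simps)
    moreover have "5 dvd e2 * (q2 - q2 mod int n) + e3 * (q3 - q3 mod int n) + e1 * q1"
      using dmod[OF n(2), of q2] dmod[OF n(2), of q3] c by (intro dvd_add) auto
    ultimately show "5 dvd dot (e1, e2, e3) q - (e2 * fst (fst (snd q) mod int n, snd (snd q) mod int n) + e3 * snd (fst (snd q) mod int n, snd (snd q) mod int n))"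
      unfolding q by simp
  qed
  show "\<not> (e2 mod 5 = 0 \<and> e3 mod 5 = 0)" using nz c by auto
qed

definition Xi :: "(int\<times>int\<times>int) list" where
  "Xi = [(1,b,c). b \<leftarrow> [0..4], c \<leftarrow> [0..4]] @ [(0,1,c). c \<leftarrow> [0..4]] @ [(0,0,1)]"

lemma Xi_dist: "distinct Xi" unfolding Xi_def by code_simp
lemma Xi_len: "length Xi = 31" unfolding Xi_def by code_simp

lemma Xi_good: "list_all (\<lambda>e. \<not>(fst e mod 5 = 0 \<and> fst (snd e) mod 5 = 0 \<and> snd (snd e) mod 5 = 0) \<and>
   (list_ex (\<lambda>s1. list_ex (\<lambda>s2. (fst e*s1+fst (snd e)*s2+snd (snd e)) mod 5 = 0) [-1,0,1]) [-1,0,1]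
    \<or> list_ex (\<lambda>s1. (fst e * s1 + fst (snd e)) mod 5 = 0) [-1,0,1] \<or> fst e mod 5 = 0)) Xi"
  unfolding Xi_def by code_simp

lemma Xi_tab: "list_all (\<lambda>a. list_all (\<lambda>b. list_all (\<lambda>c. length (filter (\<lambda>e. dot e (a,b,c) mod 5 = 0) Xi)
   = (if a = 0 \<and> b = 0 \<and> c = 0 then 31 else 6)) [0..4]) [0..4]) [0..4]"
  unfolding Xi_def dot_def by code_simp

lemma count_e:
  assumes n: "n > 0" "5 dvd n" and cf: "conflict_free n Q" and cQ: "card Q = n^2"
    and e: "e \<in> set Xi"
  shows "card {q\<in>Q. dot e q mod 5 = 0} = n * (n div 5)"
proof -
  obtain e1 e2 e3 where ee: "e = (e1,e2,e3)" by (cases e) auto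
  have g0: "\<not>(fst e mod 5 = 0 \<and> fst (snd e) mod 5 = 0 \<and> snd (snd e) mod 5 = 0) \<and>
   (list_ex (\<lambda>s1. list_ex (\<lambda>s2. (fst e*s1+fst (snd e)*s2+snd (snd e)) mod 5 = 0) [-1,0,1]) [-1,0,1]
    \<or> list_ex (\<lambda>s1. (fst e * s1 + fst (snd e)) mod 5 = 0) [-1,0,1] \<or> fst e mod 5 = 0)"
    by (rule bspec[OF Xi_good[unfolded list_all_iff] e])
  have g: "\<not>(e1 mod 5 = 0 \<and> e2 mod 5 = 0 \<and> e3 mod 5 = 0) \<and>
   ((\<exists>s1\<in>set [-1,0,1]. \<exists>s2\<in>set [-1,0,1]. (e1*s1+e2*s2+e3) mod 5 = 0)
    \<or> (\<exists>s1\<in>set [-1,0,1]. (e1 * s1 + e2) mod 5 = 0) \<or> e1 mod 5 = 0)"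
    using g0 unfolding ee list_ex_iff fst_conv snd_conv .
  have sl: "set [-1,0,1::int] = {-1,0,1}" by simp
  from g have nz: "\<not>(e1 mod 5 = 0 \<and> e2 mod 5 = 0 \<and> e3 mod 5 = 0)" by (rule conjunct1)
  from g have g2: "(\<exists>s1\<in>set [-1,0,1]. \<exists>s2\<in>set [-1,0,1]. (e1*s1+e2*s2+e3) mod 5 = 0)
    \<or> (\<exists>s1\<in>set [-1,0,1]. (e1 * s1 + e2) mod 5 = 0) \<or> e1 mod 5 = 0" by (rule conjunct2)
  hence "card {q\<in>Q. dot (e1,e2,e3) q mod 5 = 0} = n * (n div 5)"
  proof (elim disjE bexE)
    fix s1 s2 assume h1: "s1 \<in> set [-1,0,1]" and h2: "s2 \<in> set [-1,0,1]" and h3: "(e1*s1+e2*s2+e3) mod 5 = 0"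
    show ?thesis by (rule core3[OF n cf cQ h1[unfolded sl] h2[unfolded sl] h3 nz])
  next
    fix s1 assume h1: "s1 \<in> set [-1,0,1]" and h3: "(e1*s1+e2) mod 5 = 0"
    show ?thesis by (rule core2[OF n cf cQ h1[unfolded sl] h3 nz])
  next
    assume h: "e1 mod 5 = 0"
    show ?thesis by (rule core1[OF n cf cQ h nz])
  qed
  thus ?thesis unfolding ee .
qed

lemma dot_red: "dot e q mod 5 = dot e (fst q mod 5, fst (snd q) mod 5, snd (snd q) mod 5) mod 5"
proof -
  have "dot e q - dot e (fst q mod 5, fst (snd q) mod 5, snd (snd q) mod 5)
     = fst e * (fst q - fst q mod 5) + fst (snd e) * (fst (snd q) - fst (snd q) mod 5)
       + snd (snd e) * (snd (snd q) - snd (snd q) mod 5)"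
    unfolding dot_def by (simp add: algebra_simps)
  moreover have "(5::int) dvd fst e * (fst q - fst q mod 5) + fst (snd e) * (fst (snd q) - fst (snd q) mod 5)
       + snd (snd e) * (snd (snd q) - snd (snd q) mod 5)"
    by (intro dvd_add dvd_mult) (simp_all add: mod_eq_dvd_iff)
  ultimately show ?thesis by (simp add: mod_eq_dvd_iff)
qed

lemma per_q: "length (filter (\<lambda>e. dot e q mod 5 = 0) Xi) =
   (if fst q mod 5 = 0 \<and> fst (snd q) mod 5 = 0 \<and> snd (snd q) mod 5 = 0 then 31 else 6)"
proof -
  let ?a = "fst q mod 5" and ?b = "fst (snd q) mod 5" and ?c = "snd (snd q) mod 5"
  have "filter (\<lambda>e. dot e q mod 5 = 0) Xi = filter (\<lambda>e. dot e (?a,?b,?c) mod 5 = 0) Xi"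
    using dot_red[of _ q] by simp
  moreover have m: "?a \<in> set [0..4]" "?b \<in> set [0..4]" "?c \<in> set [0..4]"
    by simp_all
  moreover have "length (filter (\<lambda>e. dot e (?a,?b,?c) mod 5 = 0) Xi) = (if ?a = 0 \<and> ?b = 0 \<and> ?c = 0 then 31 else 6)"
    using Xi_tab m unfolding list_all_iff by blast
  ultimately show ?thesis by simp
qed

lemma sq5: "(5::nat) dvd m * m \<Longrightarrow> 5 dvd m"
proof -
  assume h: "5 dvd m * m"
  have e: "(m * m) mod 5 = ((m mod 5) * (m mod 5)) mod 5" by (simp add: mod_mult_eq)
  have "m mod 5 < 5" by simp
  hence "m mod 5 = 0 \<or> m mod 5 = 1 \<or> m mod 5 = 2 \<or> m mod 5 = 3 \<or> m mod 5 = 4" by linarith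
  thus ?thesis using h e by auto
qed

theorem mainTheorem8:
  fixes n :: nat
  assumes "n > 0" and "coprime n (2 * 3)" and "5 dvd n" and "\<not> 5^2 dvd n"
  shows "\<not> (\<exists>Q. conflict_free n Q \<and> card Q = n^2)"
proof
  assume "\<exists>Q. conflict_free n Q \<and> card Q = n^2"
  then obtain Q where cf: "conflict_free n Q" and cQ: "card Q = n^2" by blast
  have fin: "finite Q" using assms(1) cQ card.infinite by force
  let ?P = "\<lambda>e q. dot e q mod 5 = 0"
  let ?Z = "\<lambda>q. fst q mod 5 = 0 \<and> fst (snd q) mod 5 = 0 \<and> snd (snd q) mod 5 = 0"
  have "(\<Sum>q\<in>Q. length (filter (\<lambda>e. ?P e q) Xi)) = (\<Sum>q\<in>Q. \<Sum>e\<in>set Xi. (if ?P e q then 1 else 0))"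
    by (rule sum.cong[OF refl]) (simp add: ind_card distinct_length_filter[OF Xi_dist] Int_commute Collect_conj_eq)
  also have "... = (\<Sum>e\<in>set Xi. \<Sum>q\<in>Q. (if ?P e q then 1 else 0))" by (rule sum.swap)
  also have "... = (\<Sum>e\<in>set Xi. n * (n div 5))"
    by (rule sum.cong[OF refl]) (simp add: ind_card fin count_e[OF assms(1,3) cf cQ])
  also have "... = 31 * (n * (n div 5))" using Xi_len distinct_card[OF Xi_dist] by simp
  finally have l: "(\<Sum>q\<in>Q. length (filter (\<lambda>e. ?P e q) Xi)) = 31 * (n * (n div 5))" .
  have "(\<Sum>q\<in>Q. length (filter (\<lambda>e. ?P e q) Xi)) = (\<Sum>q\<in>Q. 6 + 25 * (if ?Z q then 1 else 0))"
    by (rule sum.cong[OF refl]) (simp add: per_q)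
  also have "... = 6 * card Q + 25 * card {q\<in>Q. ?Z q}"
    by (simp add: sum.distrib sum_distrib_left[symmetric] ind_card fin)
  finally have "31 * (n * (n div 5)) = 6 * n^2 + 25 * card {q\<in>Q. ?Z q}" using l cQ by simp
  moreover obtain m where m: "n = 5 * m" using assms(3) by blast
  ultimately have "155 * (m * m) = 150 * (m * m) + 25 * card {q\<in>Q. ?Z q}"
    by (simp add: power2_eq_square algebra_simps)
  hence "m * m = 5 * card {q\<in>Q. ?Z q}" by simp
  hence "5 dvd m" using sq5 by simp
  hence "5^2 dvd n" using m by (auto simp: power2_eq_square)
  thus False using assms(4) by blast
qed

end
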